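(* Let $G=A*_C B$ with $|A/C|\ge2$, $|B/C|\ge2$ and generating set $S=(A\cup B)\setminus\{1\}$. Let $w$ be a nonempty word such that $w^2$ is reduced. Then for every $g\in G$ there is a geodesic word $u$ with $\bar u=g$ that realizes $c_w$ at $g$, i.e. $|u|-|u|_w=\min\{|v|-|v|_w : \bar v=g\}$.
   Context: Words are finite sequences of letters in $S$; $\bar u$ is the element represented, $|u|$ the length, $|g|$ the word length of $g$; a geodesic word is one with $|u|=|\bar u|$. A word $x_1\cdots x_n$ is reduced if $n=1$ or its letters alternately lie in $A\setminus C$ and $B\setminus C$. For a nonempty word $w$ and a word $u$, $|u|_w$ is the maximal number of pairwise non-overlapping occurrences of $w$ as a contiguous subword of $u$, and $c_w(g)=|g|-\min\{|v|-|v|_w:\bar v=g\}$. *)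

theory Defs
  imports "HOL-Algebra.Algebra"
begin

definition word_eval :: "('a, 'b) monoid_scheme \<Rightarrow> 'a list \<Rightarrow> 'a" where
  "word_eval G u = foldr (\<lambda>x y. x \<otimes>\<^bsub>G\<^esub> y) u \<one>\<^bsub>G\<^esub>"

definition alternating :: "'a set \<Rightarrow> 'a set \<Rightarrow> 'a set \<Rightarrow> 'a list \<Rightarrow> bool" where
  "alternating A B C xs \<longleftrightarrow>
     (\<forall>i<length xs. xs ! i \<in> (A - C) \<union> (B - C)) \<and>
     (\<forall>i. Suc i < length xs \<longrightarrow>
        \<not> (xs ! i \<in> A - C \<and> xs ! Suc i \<in> A - C) \<and>
        \<not> (xs ! i \<in> B - C \<and> xs ! Suc i \<in> B - C))"

definition reduced_word :: "'a set \<Rightarrow> 'a set \<Rightarrow> 'a set \<Rightarrow> 'a list \<Rightarrow> bool" where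
  "reduced_word A B C xs \<longleftrightarrow> length xs = 1 \<or> (xs \<noteq> [] \<and> alternating A B C xs)"

text \<open>G is the (internal) amalgamated free product A *_C B: A, B subgroups with
  A \<inter> B = C, A \<union> B generates G, and every nonempty alternating product is
  nontrivial (normal form theorem characterisation).\<close>
definition amalgamated_product ::
  "('a, 'b) monoid_scheme \<Rightarrow> 'a set \<Rightarrow> 'a set \<Rightarrow> 'a set \<Rightarrow> bool" where
  "amalgamated_product G A B C \<longleftrightarrow>
     group G \<and> subgroup A G \<and> subgroup B G \<and> A \<inter> B = C \<and>
     generate G (A \<union> B) = carrier G \<and>
     (\<forall>xs. xs \<noteq> [] \<and> alternating A B C xs \<longrightarrow> word_eval G xs \<noteq> \<one>\<^bsub>G\<^esub>)"

definition word_length :: "('a, 'b) monoid_scheme \<Rightarrow> 'a set \<Rightarrow> 'a \<Rightarrow> nat" where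
  "word_length G S g = (LEAST n. \<exists>v. set v \<subseteq> S \<and> length v = n \<and> word_eval G v = g)"

definition geodesic :: "('a, 'b) monoid_scheme \<Rightarrow> 'a set \<Rightarrow> 'a list \<Rightarrow> bool" where
  "geodesic G S u \<longleftrightarrow> set u \<subseteq> S \<and> length u = word_length G S (word_eval G u)"

definition occ_positions :: "'a list \<Rightarrow> 'a list \<Rightarrow> nat set" where
  "occ_positions w u = {i. i + length w \<le> length u \<and> take (length w) (drop i u) = w}"

definition occ_count :: "'a list \<Rightarrow> 'a list \<Rightarrow> nat" where
  "occ_count w u = Max {card P | P. P \<subseteq> occ_positions w u \<and>
       (\<forall>i\<in>P. \<forall>j\<in>P. i < j \<longrightarrow> i + length w \<le> j)}"

end

theory Submission
  imports Defs
begin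

definition sep :: "'a set \<Rightarrow> 'a set \<Rightarrow> 'a set \<Rightarrow> 'a \<Rightarrow> 'a \<Rightarrow> bool" where
  "sep A B C x y \<longleftrightarrow> \<not> (x \<in> A - C \<and> y \<in> A - C) \<and> \<not> (x \<in> B - C \<and> y \<in> B - C)"

lemma alternating_Nil[simp]: "alternating A B C []"
  by (simp add: alternating_def)

lemma alternating_Cons:
  "alternating A B C (x#xs) \<longleftrightarrow> x \<in> (A-C)\<union>(B-C) \<and> alternating A B C xs \<and>
     (xs \<noteq> [] \<longrightarrow> sep A B C x (hd xs))"
proof
  assume H: "alternating A B C (x#xs)"
  have 1: "\<forall>i<length (x#xs). (x#xs) ! i \<in> (A - C) \<union> (B - C)" and
    2: "\<forall>i. Suc i < length (x#xs) \<longrightarrow>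
        \<not> ((x#xs) ! i \<in> A - C \<and> (x#xs) ! Suc i \<in> A - C) \<and>
        \<not> ((x#xs) ! i \<in> B - C \<and> (x#xs) ! Suc i \<in> B - C)"
    using H unfolding alternating_def by blast+
  have "x \<in> (A-C)\<union>(B-C)" using 1 by (metis length_Cons nth_Cons_0 zero_less_Suc)
  moreover have "alternating A B C xs"
  proof -
    have "\<forall>i<length xs. xs ! i \<in> (A - C) \<union> (B - C)"
      using 1 by auto
    moreover have "\<forall>i. Suc i < length xs \<longrightarrow> \<not> (xs ! i \<in> A - C \<and> xs ! Suc i \<in> A - C) \<and>
        \<not> (xs ! i \<in> B - C \<and> xs ! Suc i \<in> B - C)"
    proof (intro allI impI)
      fix i assume "Suc i < length xs" thus "\<not> (xs ! i \<in> A - C \<and> xs ! Suc i \<in> A - C) \<and>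
        \<not> (xs ! i \<in> B - C \<and> xs ! Suc i \<in> B - C)" using spec[OF 2, of "Suc i"] by auto
    qed
    ultimately show ?thesis unfolding alternating_def by blast
  qed
  moreover have "xs \<noteq> [] \<longrightarrow> sep A B C x (hd xs)"
  proof (cases xs)
    case (Cons y ys)
    have "Suc 0 < length (x#xs)" using Cons by simp
    hence "\<not> ((x#xs) ! 0 \<in> A - C \<and> (x#xs) ! Suc 0 \<in> A - C) \<and>
        \<not> ((x#xs) ! 0 \<in> B - C \<and> (x#xs) ! Suc 0 \<in> B - C)" using 2 by blast
    thus ?thesis using Cons by (simp add: sep_def)
  qed simp
  ultimately show "x \<in> (A-C)\<union>(B-C) \<and> alternating A B C xs \<and>
     (xs \<noteq> [] \<longrightarrow> sep A B C x (hd xs))" by blast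
next
  assume H: "x \<in> (A-C)\<union>(B-C) \<and> alternating A B C xs \<and> (xs \<noteq> [] \<longrightarrow> sep A B C x (hd xs))"
  have "\<forall>i<length (x#xs). (x#xs) ! i \<in> (A - C) \<union> (B - C)"
  proof (intro allI impI)
    fix i assume "i < length (x#xs)" thus "(x#xs) ! i \<in> (A - C) \<union> (B - C)"
      using H unfolding alternating_def by (cases i) auto
  qed
  moreover have "\<forall>i. Suc i < length (x#xs) \<longrightarrow> \<not> ((x#xs) ! i \<in> A - C \<and> (x#xs) ! Suc i \<in> A - C) \<and>
        \<not> ((x#xs) ! i \<in> B - C \<and> (x#xs) ! Suc i \<in> B - C)"
  proof (intro allI impI)
    fix i assume i: "Suc i < length (x#xs)"
    show "\<not> ((x#xs) ! i \<in> A - C \<and> (x#xs) ! Suc i \<in> A - C) \<and>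
        \<not> ((x#xs) ! i \<in> B - C \<and> (x#xs) ! Suc i \<in> B - C)"
    proof (cases i)
      case 0 thus ?thesis using H i by (cases xs) (auto simp: sep_def)
    next
      case (Suc k) thus ?thesis using H i unfolding alternating_def by auto
    qed
  qed
  ultimately show "alternating A B C (x#xs)" unfolding alternating_def by blast
qed

lemma alternating_append:
  "alternating A B C (xs@ys) \<longleftrightarrow> alternating A B C xs \<and> alternating A B C ys \<and>
     (xs \<noteq> [] \<longrightarrow> ys \<noteq> [] \<longrightarrow> sep A B C (last xs) (hd ys))"
  by (induction xs) (auto simp: alternating_Cons)

lemma alternating_snoc:
  "alternating A B C (xs@[a]) \<longleftrightarrow> alternating A B C xs \<and> a \<in> (A-C)\<union>(B-C) \<and>
     (xs \<noteq> [] \<longrightarrow> sep A B C (last xs) a)"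
  by (auto simp: alternating_append alternating_Cons)

lemma sep_sym: "sep A B C x y = sep A B C y x" by (auto simp: sep_def)

lemma alternating_rev: "alternating A B C (rev xs) = alternating A B C xs"
  by (induction xs) (auto simp: alternating_append alternating_Cons hd_rev last_rev sep_sym)

definition cls :: "'a set \<Rightarrow> 'a set \<Rightarrow> 'a set \<Rightarrow> 'a \<Rightarrow> bool \<times> bool" where
  "cls A B C x = (x \<in> A - C, x \<in> B - C)"

lemma alternating_cls:
  assumes "map (cls A B C) xs = map (cls A B C) ys"
  shows "alternating A B C xs = alternating A B C ys"
proof -
  have l: "length xs = length ys" using assms by (metis length_map)
  have e: "\<And>i. i < length xs \<Longrightarrow> (xs!i \<in> A - C) = (ys!i \<in> A-C) \<and> (xs!i \<in> B - C) = (ys!i \<in> B-C)"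
  proof -
    fix i assume "i < length xs"
    hence "cls A B C (xs!i) = cls A B C (ys!i)" using assms l by (metis nth_map)
    thus "(xs!i \<in> A - C) = (ys!i \<in> A-C) \<and> (xs!i \<in> B - C) = (ys!i \<in> B-C)" by (simp add: cls_def)
  qed
  show ?thesis unfolding alternating_def
  proof
    assume "(\<forall>i<length xs. xs ! i \<in> A - C \<union> (B - C)) \<and>
    (\<forall>i. Suc i < length xs \<longrightarrow>
         \<not> (xs ! i \<in> A - C \<and> xs ! Suc i \<in> A - C) \<and> \<not> (xs ! i \<in> B - C \<and> xs ! Suc i \<in> B - C))"
    thus "(\<forall>i<length ys. ys ! i \<in> A - C \<union> (B - C)) \<and>
    (\<forall>i. Suc i < length ys \<longrightarrow>
         \<not> (ys ! i \<in> A - C \<and> ys ! Suc i \<in> A - C) \<and> \<not> (ys ! i \<in> B - C \<and> ys ! Suc i \<in> B - C))"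
      using e l by (metis Suc_lessD Un_iff)
  next
    assume "(\<forall>i<length ys. ys ! i \<in> A - C \<union> (B - C)) \<and>
    (\<forall>i. Suc i < length ys \<longrightarrow>
         \<not> (ys ! i \<in> A - C \<and> ys ! Suc i \<in> A - C) \<and> \<not> (ys ! i \<in> B - C \<and> ys ! Suc i \<in> B - C))"
    thus "(\<forall>i<length xs. xs ! i \<in> A - C \<union> (B - C)) \<and>
    (\<forall>i. Suc i < length xs \<longrightarrow>
         \<not> (xs ! i \<in> A - C \<and> xs ! Suc i \<in> A - C) \<and> \<not> (xs ! i \<in> B - C \<and> xs ! Suc i \<in> B - C))"
      using e l by (metis Suc_lessD Un_iff)
  qed
qed

lemma word_eval_Nil[simp]: "word_eval G [] = \<one>\<^bsub>G\<^esub>" by (simp add: word_eval_def)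
lemma word_eval_Cons[simp]: "word_eval G (x#xs) = x \<otimes>\<^bsub>G\<^esub> word_eval G xs" by (simp add: word_eval_def)


locale amal = group G for G (structure) + fixes A B C :: "'a set"
  assumes AP: "amalgamated_product G A B C"
begin

lemma sgA: "subgroup A G" and sgB: "subgroup B G" and ABC: "A \<inter> B = C"
  and NF0: "xs \<noteq> [] \<Longrightarrow> alternating A B C xs \<Longrightarrow> word_eval G xs \<noteq> \<one>"
  and gen: "generate G (A \<union> B) = carrier G"
  using AP unfolding amalgamated_product_def by auto

lemma A_carr: "A \<subseteq> carrier G" using sgA by (simp add: subgroup.subset)
lemma B_carr: "B \<subseteq> carrier G" using sgB by (simp add: subgroup.subset)
lemma C_A: "C \<subseteq> A" and C_B: "C \<subseteq> B" using ABC by auto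

lemma eval_closed: "set xs \<subseteq> carrier G \<Longrightarrow> word_eval G xs \<in> carrier G"
  by (induction xs) auto

lemma eval_append: "set xs \<subseteq> carrier G \<Longrightarrow> set ys \<subseteq> carrier G \<Longrightarrow>
   word_eval G (xs@ys) = word_eval G xs \<otimes> word_eval G ys"
  by (induction xs) (auto simp: m_assoc eval_closed)

lemma eval_snoc: "set xs \<subseteq> carrier G \<Longrightarrow> a \<in> carrier G \<Longrightarrow>
   word_eval G (xs@[a]) = word_eval G xs \<otimes> a"
  by (simp add: eval_append)

lemma eval_invw: "set xs \<subseteq> carrier G \<Longrightarrow> word_eval G (rev (map (\<lambda>z. inv z) xs)) = inv (word_eval G xs)"
proof (induction xs)
  case (Cons a xs)
  have "set (rev (map (\<lambda>z. inv z) xs)) \<subseteq> carrier G" using Cons.prems by auto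
  thus ?case using Cons by (simp add: eval_append eval_closed inv_mult_group)
qed simp

lemma sub_mem_mult: "subgroup H G \<Longrightarrow> x \<in> H \<Longrightarrow> y \<in> H \<Longrightarrow> x \<otimes> y \<in> H"
  by (simp add: subgroup.m_closed)

lemma cls_mult: assumes "c \<in> C" "x \<in> carrier G" shows "cls A B C (x \<otimes> c) = cls A B C x"
proof -
  have cc: "c \<in> carrier G" "inv c \<in> A" "inv c \<in> B" "inv c \<in> C" "c \<in> A" "c \<in> B"
    using assms C_A C_B A_carr sgA sgB ABC by (auto simp: subgroup.m_inv_closed)
  have x: "x = (x \<otimes> c) \<otimes> inv c" using cc assms by (simp add: m_assoc)
  have "x \<otimes> c \<in> A \<longleftrightarrow> x \<in> A" using cc x sgA by (metis subgroup.m_closed)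
  moreover have "x \<otimes> c \<in> B \<longleftrightarrow> x \<in> B" using cc x sgB by (metis subgroup.m_closed)
  ultimately show ?thesis unfolding cls_def using ABC by auto
qed

lemma cls_inv: assumes "x \<in> carrier G" shows "cls A B C (inv x) = cls A B C x"
proof -
  have "inv x \<in> A \<longleftrightarrow> x \<in> A" using sgA assms by (metis inv_inv subgroup.m_inv_closed)
  moreover have "inv x \<in> B \<longleftrightarrow> x \<in> B" using sgB assms by (metis inv_inv subgroup.m_inv_closed)
  ultimately show ?thesis unfolding cls_def using ABC by auto
qed

lemma alt_carr: "alternating A B C xs \<Longrightarrow> set xs \<subseteq> carrier G"
  using A_carr B_carr unfolding alternating_def by (force simp: in_set_conv_nth)

lemma alt_invw: assumes "alternating A B C xs" shows "alternating A B C (rev (map (\<lambda>z. inv z) xs))"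
proof -
  have "map (cls A B C) (map (\<lambda>z. inv z) xs) = map (cls A B C) xs"
    using alt_carr[OF assms] cls_inv by auto
  thus ?thesis using assms alternating_cls alternating_rev by metis
qed

end

lemma sep_cls: "cls A B C q = cls A B C q' \<Longrightarrow> sep A B C p q = sep A B C p q'"
  by (simp add: cls_def sep_def)

context amal begin

lemma C_inv: "c \<in> C \<Longrightarrow> inv c \<in> C"
  using sgA sgB ABC by (metis IntD1 IntD2 IntI subgroup.m_inv_closed)

lemma alt_Cons_mem: "alternating A B C (x#xs) \<Longrightarrow> x \<in> (A-C)\<union>(B-C)"
  by (simp add: alternating_Cons)

lemma absorb:
  assumes "alternating A B C (x'@[a])" "c \<in> C"
  shows "alternating A B C (x'@[a \<otimes> c])"
proof -
  have "a \<in> carrier G" using alt_carr[OF assms(1)] by auto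
  hence "map (cls A B C) (x'@[a \<otimes> c]) = map (cls A B C) (x'@[a])" using cls_mult assms(2) by simp
  thus ?thesis using assms(1) alternating_cls by metis
qed

lemma NF:
  "alternating A B C x \<Longrightarrow> alternating A B C y \<Longrightarrow> word_eval G x = word_eval G y \<Longrightarrow> length x = length y"
proof (induction "length x" arbitrary: x y rule: less_induct)
  case less
  show ?case
  proof (cases "x = [] \<or> y = []")
    case True
    thus ?thesis using NF0 less.prems by (metis word_eval_Nil)
  next
    case False
    then obtain x' a y' b where xe: "x = x'@[a]" and ye: "y = y'@[b]" by (metis rev_exhaust)
    have ax: "alternating A B C x'" "a \<in> (A-C)\<union>(B-C)" "x' \<noteq> [] \<longrightarrow> sep A B C (last x') a"
      using less.prems(1) xe alternating_snoc by metis+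
    have ay: "alternating A B C y'" "b \<in> (A-C)\<union>(B-C)" "y' \<noteq> [] \<longrightarrow> sep A B C (last y') b"
      using less.prems(2) ye alternating_snoc by metis+
    have cx: "set x' \<subseteq> carrier G" "a \<in> carrier G" using alt_carr[OF less.prems(1)] xe by auto
    have cy: "set y' \<subseteq> carrier G" "b \<in> carrier G" using alt_carr[OF less.prems(2)] ye by auto
    define XX where "XX = word_eval G x'"
    define YY where "YY = word_eval G y'"
    have XXYY: "XX \<in> carrier G" "YY \<in> carrier G" using cx cy eval_closed XX_def YY_def by auto
    have eq: "XX \<otimes> a = YY \<otimes> b" using less.prems(3) xe ye cx cy XX_def YY_def by (simp add: eval_snoc)
    show ?thesis
    proof (cases "sep A B C a b")
      case True
      define z where "z = x @ rev (map (\<lambda>t. inv t) y)"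
      have "alternating A B C z"
      proof -
        have "hd (rev (map (\<lambda>t. inv t) y)) = inv b" using ye by (simp add: hd_rev)
        moreover have "sep A B C a (inv b)" using True sep_cls cls_inv cy by metis
        ultimately show ?thesis unfolding z_def using alternating_append less.prems alt_invw xe
          by (metis last_snoc)
      qed
      moreover have "z \<noteq> []" using z_def xe by simp
      moreover have "word_eval G z = \<one>"
      proof -
        have "set (rev (map (\<lambda>t. inv t) y)) \<subseteq> carrier G" using alt_carr[OF less.prems(2)] by auto
        thus ?thesis unfolding z_def using eval_append eval_invw alt_carr less.prems
          by (metis eval_closed r_inv)
      qed
      ultimately show ?thesis using NF0 by blast
    next
      case False
      obtain H where H: "H = A \<or> H = B" "a \<in> H - C" "b \<in> H - C"
        using False ax(2) ay(2) unfolding sep_def by blast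
      have sgH: "subgroup H G" using H sgA sgB by blast
      define c where "c = a \<otimes> inv b"
      have cH: "c \<in> H" unfolding c_def using sgH H by (simp add: subgroup.m_closed subgroup.m_inv_closed)
      have cc: "c \<in> carrier G" using c_def cx cy by simp
      show ?thesis
      proof (cases "c \<in> C")
        case False
        have clsc: "cls A B C c = cls A B C a" "cls A B C c = cls A B C b"
          using H cH False ABC unfolding cls_def by auto
        define z where "z = (x' @ [c]) @ rev (map (\<lambda>t. inv t) y')"
        have a1: "alternating A B C (x' @ [c])"
        proof -
          have "map (cls A B C) (x'@[c]) = map (cls A B C) (x'@[a])" using clsc by simp
          thus ?thesis using less.prems(1) xe alternating_cls by metis
        qed
        have a2: "alternating A B C (rev (map (\<lambda>t. inv t) y'))" using alt_invw ay by blast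
        have a3: "y' \<noteq> [] \<longrightarrow> sep A B C c (hd (rev (map (\<lambda>t. inv t) y')))"
        proof
          assume ne: "y' \<noteq> []"
          have "hd (rev (map (\<lambda>t. inv t) y')) = inv (last y')" using ne by (simp add: hd_rev last_map)
          moreover have "cls A B C (inv (last y')) = cls A B C (last y')" using cls_inv cy(1) ne last_in_set by (metis subsetD)
          moreover have "sep A B C (last y') c" using ay(3) ne sep_cls clsc by metis
          ultimately show "sep A B C c (hd (rev (map (\<lambda>t. inv t) y')))" using sep_cls sep_sym by metis
        qed
        have "alternating A B C z" unfolding z_def using a1 a2 a3 by (subst alternating_append) simp
        moreover have "z \<noteq> []" using z_def by simp
        moreover have "word_eval G z = \<one>"
        proof -
          have s1: "set (rev (map (\<lambda>t. inv t) y')) \<subseteq> carrier G" using cy by auto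
          have "word_eval G z = (XX \<otimes> c) \<otimes> inv YY"
            unfolding z_def XX_def YY_def using eval_append eval_invw cy cx cc s1
            by (simp add: eval_append eval_invw m_assoc eval_closed)
          also have "\<dots> = ((XX \<otimes> a) \<otimes> inv b) \<otimes> inv YY" using c_def XXYY cx cy by (simp add: m_assoc)
          also have "\<dots> = ((YY \<otimes> b) \<otimes> inv b) \<otimes> inv YY" using eq by simp
          also have "\<dots> = \<one>" using XXYY cy by (simp add: m_assoc)
          finally show ?thesis .
        qed
        ultimately show ?thesis using NF0 by blast
      next
        case True
        have Xc: "XX \<otimes> c = YY"
        proof -
          have "XX \<otimes> c = (XX \<otimes> a) \<otimes> inv b" using c_def XXYY cx cy by (simp add: m_assoc)
          also have "\<dots> = (YY \<otimes> b) \<otimes> inv b" using eq by simp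
          also have "\<dots> = YY" using XXYY cy by (simp add: m_assoc)
          finally show ?thesis .
        qed
        show ?thesis
        proof (cases "x' = []")
          case False
          then obtain x'' a' where x'e: "x' = x''@[a']" by (metis rev_exhaust)
          define x2 where "x2 = x''@[a' \<otimes> c]"
          have "alternating A B C x2" unfolding x2_def using absorb ax(1) x'e True by blast
          moreover have "word_eval G x2 = word_eval G y'"
          proof -
            have "set x'' \<subseteq> carrier G" "a' \<in> carrier G" using cx x'e by auto
            hence "word_eval G x2 = word_eval G x'' \<otimes> (a' \<otimes> c)" "XX = word_eval G x'' \<otimes> a'"
              unfolding x2_def XX_def x'e using cc by (simp_all add: eval_snoc)
            thus ?thesis using Xc YY_def \<open>set x'' \<subseteq> carrier G\<close> \<open>a' \<in> carrier G\<close> cc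
              by (simp add: m_assoc eval_closed)
          qed
          moreover have "length x2 < length x" using x2_def xe x'e by simp
          ultimately have "length x2 = length y'" using less.hyps ay(1) by blast
          thus ?thesis using x2_def xe x'e ye by simp
        next
          case x'0: True
          show ?thesis
          proof (cases "y' = []")
            case True thus ?thesis using x'0 xe ye by simp
          next
            case False
            then obtain y'' b' where y'e: "y' = y''@[b']" by (metis rev_exhaust)
            define y2 where "y2 = y''@[b' \<otimes> inv c]"
            have "alternating A B C y2" unfolding y2_def using absorb ay(1) y'e C_inv True by blast
            moreover have "word_eval G [] = word_eval G y2"
            proof -
              have "set y'' \<subseteq> carrier G" "b' \<in> carrier G" using cy y'e by auto
              hence "word_eval G y2 = word_eval G y'' \<otimes> (b' \<otimes> inv c)" "YY = word_eval G y'' \<otimes> b'"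
                unfolding y2_def YY_def y'e using cc by (simp_all add: eval_snoc)
              moreover have "YY = c" using Xc x'0 XX_def cc by simp
              moreover have "word_eval G y'' \<otimes> (b' \<otimes> inv c) = (word_eval G y'' \<otimes> b') \<otimes> inv c"
                using \<open>set y'' \<subseteq> carrier G\<close> \<open>b' \<in> carrier G\<close> cc by (simp add: m_assoc eval_closed)
              ultimately show ?thesis using cc by simp
            qed
            moreover have "length [] < length x" using xe by simp
            ultimately have "length ([]::'a list) = length y2" using less.hyps alternating_Nil by blast
            thus ?thesis using y2_def by simp
          qed
        qed
      qed
    qed
  qed
qed

end

definition valid :: "'a list \<Rightarrow> 'a list \<Rightarrow> nat set \<Rightarrow> bool" where
  "valid w u P \<longleftrightarrow> P \<subseteq> occ_positions w u \<and> (\<forall>i\<in>P. \<forall>j\<in>P. i < j \<longrightarrow> i + length w \<le> j)"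

lemma occ_sub: "occ_positions w u \<subseteq> {..length u}"
  unfolding occ_positions_def by auto

lemma valid_fin: "valid w u P \<Longrightarrow> finite P"
  unfolding valid_def using occ_sub finite_subset by (metis finite_atMost subset_trans)

lemma occ_set_eq: "{card P | P. P \<subseteq> occ_positions w u \<and>
       (\<forall>i\<in>P. \<forall>j\<in>P. i < j \<longrightarrow> i + length w \<le> j)} = {card P | P. valid w u P}"
  unfolding valid_def by simp

lemma occ_set_fin: "finite {card P | P. valid w u P}"
proof -
  have "{card P | P. valid w u P} \<subseteq> {..Suc (length u)}"
  proof
    fix n assume "n \<in> {card P | P. valid w u P}"
    then obtain P where P: "valid w u P" "n = card P" by blast
    have "P \<subseteq> {..length u}" using P occ_sub unfolding valid_def by blast
    hence "card P \<le> card {..length u}" by (metis card_mono finite_atMost)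
    thus "n \<in> {..Suc (length u)}" using P by simp
  qed
  thus ?thesis using finite_subset by blast
qed

lemma occ_count_ge: "valid w u P \<Longrightarrow> card P \<le> occ_count w u"
  unfolding occ_count_def occ_set_eq using occ_set_fin by (intro Max_ge) blast+

lemma occ_count_ex: "\<exists>P. valid w u P \<and> card P = occ_count w u"
proof -
  have "valid w u {}" by (simp add: valid_def)
  hence "{card P | P. valid w u P} \<noteq> {}" by blast
  hence "occ_count w u \<in> {card P | P. valid w u P}"
    unfolding occ_count_def occ_set_eq using occ_set_fin Max_in by blast
  thus ?thesis by auto
qed

lemma occ_nth: assumes "j \<in> occ_positions w u" "k < length w" shows "u ! (j + k) = w ! k"
proof -
  have t: "take (length w) (drop j u) = w" and l: "j + length w \<le> length u"
    using assms(1) unfolding occ_positions_def by auto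
  have "w ! k = take (length w) (drop j u) ! k" using t by simp
  also have "\<dots> = drop j u ! k" using assms(2) by simp
  also have "\<dots> = u ! (j + k)" using l assms(2) by simp
  finally show ?thesis by simp
qed

lemma take_drop_prefix: "j + n \<le> length p \<Longrightarrow> take n (drop j (p @ r)) = take n (drop j p)"
  by simp

lemma occ_replace:
  assumes wne: "w \<noteq> []" and nxy: "\<not> (x = last w \<and> y = hd w)" and m: "length m' \<le> 2"
  shows "occ_count w (p@[x,y]@q) \<le> Suc (occ_count w (p@m'@q))"
proof -
  define u where "u = p@[x,y]@q"
  define u' where "u' = p@m'@q"
  define i where "i = length p"
  define d where "d = 2 - length m'"
  define n where "n = length w"
  have n0: "n > 0" using wne n_def by simp
  obtain P where P: "valid w u P" "card P = occ_count w u" using occ_count_ex by blast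
  have finP: "finite P" using P valid_fin by blast
  define P1 where "P1 = {j\<in>P. j + n \<le> i}"
  define P2 where "P2 = {j\<in>P. i + 2 \<le> j}"
  define P3 where "P3 = P - P1 - P2"
  have ux: "u ! i = x" and uy: "u ! (i+1) = y" unfolding u_def i_def by (simp_all add: nth_append)
  have P3le: "card P3 \<le> 1"
  proof -
    have "\<forall>a\<in>P3. \<forall>b\<in>P3. a = b"
    proof (rule ccontr)
      assume "\<not> (\<forall>a\<in>P3. \<forall>b\<in>P3. a = b)"
      then obtain j1 j2 where j: "j1 \<in> P3" "j2 \<in> P3" "j1 < j2"
        by (metis linorder_neqE_nat)
      have "j1 + n \<le> j2" using j P(1) unfolding valid_def P3_def n_def by auto
      moreover have "j2 < i + 2" "\<not> j1 + n \<le> i" using j unfolding P3_def P1_def P2_def by auto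
      ultimately have e1: "j1 + (n - 1) = i" and e2: "j2 + 0 = i + 1" using n0 by auto
      have o1: "j1 \<in> occ_positions w u" "j2 \<in> occ_positions w u"
        using j P(1) unfolding valid_def P3_def by auto
      have "n - 1 < length w" using n0 n_def by simp
      hence "u ! (j1 + (n - 1)) = w ! (n - 1)" by (rule occ_nth[OF o1(1)])
      hence "x = last w" using e1 ux wne n_def by (simp add: last_conv_nth)
      moreover have "u ! (j2 + 0) = w ! 0" using occ_nth o1(2) n0 n_def by blast
      hence "y = hd w" using e2 uy wne by (simp add: hd_conv_nth)
      ultimately show False using nxy by blast
    qed
    thus ?thesis using finP P3_def card_le_Suc0_iff_eq by (metis One_nat_def finite_Diff)
  qed
  define Q where "Q = P1 \<union> (\<lambda>j. j - d) ` P2"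
  have vQ: "valid w u' Q"
    unfolding valid_def
  proof (intro conjI)
    show "Q \<subseteq> occ_positions w u'"
    proof
      fix j assume "j \<in> Q"
      then consider "j \<in> P1" | j0 where "j0 \<in> P2" "j = j0 - d" unfolding Q_def by blast
      thus "j \<in> occ_positions w u'"
      proof cases
        case 1
        hence o: "j \<in> occ_positions w u" "j + n \<le> i" using P(1) unfolding P1_def valid_def by auto
        have "take n (drop j u') = take n (drop j p)" unfolding u'_def using o i_def by simp
        also have "\<dots> = take n (drop j u)" unfolding u_def using o i_def by simp
        finally show ?thesis using o unfolding occ_positions_def u'_def i_def n_def by auto
      next
        case 2
        hence o: "j0 \<in> occ_positions w u" "i + 2 \<le> j0" using P(1) unfolding P2_def valid_def by auto
        have "drop j u' = drop (j0 - i - 2) q" unfolding u'_def using 2 o i_def d_def m by simp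
        also have "\<dots> = drop j0 u"
        proof -
          have "j0 - length p = Suc (Suc (j0 - Suc (Suc (length p))))" using o i_def by simp
          thus ?thesis unfolding u_def using o i_def by simp
        qed
        finally have "drop j u' = drop j0 u" .
        moreover have "length u' = length u - d" unfolding u'_def u_def d_def using m by simp
        ultimately show ?thesis using o 2 unfolding occ_positions_def d_def by auto
      qed
    qed
  next
    show "\<forall>a\<in>Q. \<forall>b\<in>Q. a < b \<longrightarrow> a + length w \<le> b"
    proof (intro ballI impI)
      fix a b assume ab: "a \<in> Q" "b \<in> Q" "a < b"
      have dP: "\<And>a b. a \<in> P \<Longrightarrow> b \<in> P \<Longrightarrow> a < b \<Longrightarrow> a + n \<le> b" using P(1) unfolding valid_def n_def by auto
      have d2: "d \<le> 2" unfolding d_def by simp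
      have ds: "\<And>j. j \<in> P2 \<Longrightarrow> i \<le> j - d" "\<And>j. j \<in> P1 \<Longrightarrow> j + n \<le> i"
        unfolding P2_def P1_def using d2 by auto
      have "a + n \<le> b"
      proof (cases "a \<in> P1")
        case aP1: True
        show ?thesis
        proof (cases "b \<in> P1")
          case True thus ?thesis using aP1 ab dP unfolding P1_def by auto
        next
          case False
          then obtain b0 where "b0 \<in> P2" "b = b0 - d" using ab unfolding Q_def by blast
          thus ?thesis using ds aP1 by fastforce
        qed
      next
        case False
        then obtain a0 where a0: "a0 \<in> P2" "a = a0 - d" using ab unfolding Q_def by blast
        show ?thesis
        proof (cases "b \<in> P1")
          case True
          hence "b + n \<le> i" using ds by blast
          moreover have "i \<le> a" using ds a0 by blast
          ultimately show ?thesis using ab n0 by linarith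
        next
          case False
          then obtain b0 where b0: "b0 \<in> P2" "b = b0 - d" using ab unfolding Q_def by blast
          have "i + 2 \<le> a0" "i + 2 \<le> b0" using a0 b0 unfolding P2_def by auto
          hence "a0 < b0" using ab a0 b0 d2 by linarith
          hence "a0 + n \<le> b0" using dP a0 b0 unfolding P2_def by blast
          thus ?thesis using a0 b0 \<open>i + 2 \<le> a0\<close> d2 by linarith
        qed
      qed
      thus "a + length w \<le> b" using n_def by simp
    qed
  qed
  have cardP: "card P = card P1 + card P2 + card P3"
  proof -
    have "P = P1 \<union> P2 \<union> P3" "P1 \<inter> P2 = {}" "(P1 \<union> P2) \<inter> P3 = {}"
      unfolding P1_def P2_def P3_def using n0 by auto
    thus ?thesis using finP by (metis card_Un_disjoint finite_Un)
  qed
  have cardQ: "card Q = card P1 + card P2"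
  proof -
    have "inj_on (\<lambda>j. j - d) P2" unfolding P2_def d_def inj_on_def by auto
    hence c2: "card ((\<lambda>j. j - d) ` P2) = card P2" by (simp add: card_image)
    have "P1 \<inter> (\<lambda>j. j - d) ` P2 = {}" unfolding P1_def P2_def d_def using n0 by auto
    thus ?thesis unfolding Q_def using c2 finP P1_def P2_def by (simp add: card_Un_disjoint)
  qed
  have "card Q \<le> occ_count w u'" using occ_count_ge vQ by blast
  thus ?thesis using P(2) cardP cardQ P3le u_def u'_def by simp
qed


lemma split_pair: "Suc i < length v \<Longrightarrow> v = take i v @ [v!i, v!Suc i] @ drop (Suc (Suc i)) v"
proof -
  assume h: "Suc i < length v"
  have "drop i v = v!i # v!Suc i # drop (Suc (Suc i)) v"
    using h by (metis Cons_nth_drop_Suc Suc_lessD)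
  thus ?thesis by (metis append_Cons append_Nil append_take_drop_id)
qed

context amal begin

lemma S_carr: "(A \<union> B) - {\<one>} \<subseteq> carrier G" using A_carr B_carr by auto

lemma nonalt_pair:
  assumes "set v \<subseteq> (A \<union> B) - {\<one>}" "\<not> alternating A B C v" "\<not> length v \<le> 1"
  shows "\<exists>i H. Suc i < length v \<and> (H = A \<or> H = B) \<and> v!i \<in> H \<and> v!Suc i \<in> H"
proof -
  have mem: "\<And>k. k < length v \<Longrightarrow> v!k \<in> A \<union> B" using assms(1) nth_mem by blast
  from assms(2) consider (a) k where "k < length v" "v!k \<notin> (A-C)\<union>(B-C)"
    | (b) k where "Suc k < length v" "(v ! k \<in> A - C \<and> v ! Suc k \<in> A - C) \<or> (v ! k \<in> B - C \<and> v ! Suc k \<in> B - C)"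
    unfolding alternating_def by blast
  thus ?thesis
  proof cases
    case a
    hence kC: "v!k \<in> C" using mem by blast
    show ?thesis
    proof (cases "Suc k < length v")
      case True
      thus ?thesis using mem[of "Suc k"] kC C_A C_B by blast
    next
      case False
      hence k: "k = Suc (k - 1)" "Suc (k-1) < length v" using a assms(3) by auto
      have "v!(k-1) \<in> A \<union> B" using mem k by simp
      thus ?thesis using k kC C_A C_B by (metis UnE subsetD)
    qed
  next
    case b thus ?thesis by blast
  qed
qed

lemma R:
  assumes wne: "w \<noteq> []" and wsep: "sep A B C (last w) (hd w)" and wl: "last w \<notin> C" and wh: "hd w \<notin> C"
  shows "set v \<subseteq> (A \<union> B) - {\<one>} \<Longrightarrow> \<exists>u. set u \<subseteq> (A \<union> B) - {\<one>} \<and> word_eval G u = word_eval G v \<and>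
     (alternating A B C u \<or> length u \<le> 1) \<and>
     length u - occ_count w u \<le> length v - occ_count w v \<and> length u \<le> length v"
proof (induction "length v" arbitrary: v rule: less_induct)
  case less
  show ?case
  proof (cases "alternating A B C v \<or> length v \<le> 1")
    case True thus ?thesis using less.prems by blast
  next
    case False
    then obtain i H where iH: "Suc i < length v" "H = A \<or> H = B" "v!i \<in> H" "v!Suc i \<in> H"
      using nonalt_pair less.prems by blast
    define p where "p = take i v"
    define q where "q = drop (Suc (Suc i)) v"
    define x where "x = v!i"
    define y where "y = v!Suc i"
    have ve: "v = p @ [x,y] @ q" using split_pair iH(1) p_def q_def x_def y_def by blast
    have sgH: "subgroup H G" using iH sgA sgB by blast
    define z where "z = x \<otimes> y"
    have zH: "z \<in> H" using z_def sgH iH x_def y_def by (simp add: subgroup.m_closed)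
    define m' where "m' = (if z = \<one> then [] else [z])"
    define v' where "v' = p @ m' @ q"
    have setv: "set p \<subseteq> (A \<union> B) - {\<one>}" "set q \<subseteq> (A \<union> B) - {\<one>}" "x \<in> carrier G" "y \<in> carrier G"
      using less.prems ve S_carr by auto
    have setm: "set m' \<subseteq> (A \<union> B) - {\<one>}" using zH iH m'_def by auto
    have sv': "set v' \<subseteq> (A \<union> B) - {\<one>}" using setv setm v'_def by auto
    have ev: "word_eval G v' = word_eval G v"
    proof -
      have "word_eval G m' = word_eval G [x,y]" using m'_def z_def setv by auto
      moreover have "set m' \<subseteq> carrier G" using setm S_carr by blast
      ultimately show ?thesis unfolding v'_def ve using setv S_carr
        by (simp add: eval_append m_assoc eval_closed)
    qed
    have lv': "length v' < length v" unfolding v'_def ve m'_def by simp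
    have nxy: "\<not> (x = last w \<and> y = hd w)"
    proof
      assume "x = last w \<and> y = hd w"
      hence "last w \<in> H - C" "hd w \<in> H - C" using iH x_def y_def wl wh by auto
      thus False using wsep iH(2) unfolding sep_def by blast
    qed
    have oc: "occ_count w v \<le> Suc (occ_count w v')"
      unfolding ve v'_def using occ_replace[OF wne nxy] m'_def by simp
    obtain u where u: "set u \<subseteq> (A \<union> B) - {\<one>}" "word_eval G u = word_eval G v'"
      "alternating A B C u \<or> length u \<le> 1"
      "length u - occ_count w u \<le> length v' - occ_count w v'" "length u \<le> length v'"
      using less.hyps[OF lv' sv'] by blast
    have "length v' - occ_count w v' \<le> length v - occ_count w v" using lv' oc by linarith
    thus ?thesis using u ev lv' by (intro exI[of _ u]) auto
  qed
qed

lemma noC: assumes "alternating A B C y" "y \<noteq> []" shows "word_eval G y \<notin> C"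
proof
  assume cC: "word_eval G y \<in> C"
  define c where "c = word_eval G y"
  obtain y' b where ye: "y = y'@[b]" using assms(2) by (metis rev_exhaust)
  have cy: "set y' \<subseteq> carrier G" "b \<in> carrier G" using alt_carr[OF assms(1)] ye by auto
  have cc: "c \<in> carrier G" using cC C_A A_carr c_def by blast
  define y2 where "y2 = y'@[b \<otimes> inv c]"
  have "alternating A B C y2" unfolding y2_def using absorb assms(1) ye C_inv cC c_def by blast
  moreover have "word_eval G y2 = \<one>"
  proof -
    have "word_eval G y2 = word_eval G y' \<otimes> (b \<otimes> inv c)"
      unfolding y2_def using cc cy by (simp add: eval_snoc)
    moreover have "c = word_eval G y' \<otimes> b"
      unfolding c_def ye using cy by (simp add: eval_snoc)
    moreover have "word_eval G y' \<otimes> (b \<otimes> inv c) = (word_eval G y' \<otimes> b) \<otimes> inv c"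
      using cy cc by (simp add: m_assoc eval_closed)
    ultimately show ?thesis using cc by simp
  qed
  ultimately show False using NF0 y2_def by simp
qed

lemma Nform: assumes "set u \<subseteq> (A \<union> B) - {\<one>}" "alternating A B C u \<or> length u \<le> 1"
  shows "alternating A B C u \<or> (\<exists>c. u = [c] \<and> c \<in> C - {\<one>})"
proof (cases "alternating A B C u")
  case False
  hence "length u \<le> 1" using assms by blast
  then consider "u = []" | c where "u = [c]" by (cases u) auto
  thus ?thesis
  proof cases
    case 2
    have "c \<notin> (A-C)\<union>(B-C)" using False 2 by (simp add: alternating_Cons)
    thus ?thesis using assms(1) 2 by auto
  qed simp
qed simp

lemma cmp:
  assumes "set u \<subseteq> (A \<union> B) - {\<one>}" "alternating A B C u \<or> length u \<le> 1"
    "set u' \<subseteq> (A \<union> B) - {\<one>}" "alternating A B C u' \<or> length u' \<le> 1"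
    "word_eval G u = word_eval G u'"
  shows "length u = length u'"
proof -
  have oneC: "word_eval G [c] = c" if "c \<in> C" for c using that C_A A_carr by auto
  have h: "length a = length b" if "alternating A B C a" "b = [c]" "c \<in> C - {\<one>}" "word_eval G a = word_eval G b" for a b c
  proof (cases "a = []")
    case True thus ?thesis using that oneC by simp
  next
    case False thus ?thesis using noC that oneC by auto
  qed
  show ?thesis using Nform[OF assms(1,2)] Nform[OF assms(3,4)]
  proof (elim disjE exE conjE)
    assume "alternating A B C u" "alternating A B C u'" thus ?thesis using NF assms(5) by blast
  qed (use h assms(5) in auto)
qed

lemma gen_word: "g \<in> generate G (A \<union> B) \<Longrightarrow> \<exists>v. set v \<subseteq> (A \<union> B) - {\<one>} \<and> word_eval G v = g"
proof (induction rule: generate.induct)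
  case one thus ?case by (intro exI[of _ "[]"]) simp
next
  case (incl h)
  have "h \<in> carrier G" using incl A_carr B_carr by auto
  show ?case
  proof (cases "h = \<one>")
    case True thus ?thesis by (intro exI[of _ "[]"]) simp
  next
    case False thus ?thesis using incl \<open>h \<in> carrier G\<close> by (intro exI[of _ "[h]"]) simp
  qed
next
  case (inv h)
  have "inv h \<in> A \<union> B" using inv sgA sgB by (auto simp: subgroup.m_inv_closed)
  moreover have "inv h \<in> carrier G" using inv A_carr B_carr by auto
  ultimately show ?case
  proof (cases "inv h = \<one>")
    case True thus ?thesis by (intro exI[of _ "[]"]) simp
  next
    case False thus ?thesis using \<open>inv h \<in> A \<union> B\<close> \<open>inv h \<in> carrier G\<close> by (intro exI[of _ "[inv h]"]) simp
  qed
next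
  case (eng h1 h2)
  then obtain v1 v2 where "set v1 \<subseteq> (A \<union> B) - {\<one>}" "word_eval G v1 = h1"
    "set v2 \<subseteq> (A \<union> B) - {\<one>}" "word_eval G v2 = h2" by blast
  thus ?case using S_carr by (intro exI[of _ "v1 @ v2"]) (auto simp: eval_append)
qed

end

theorem lemma3p2:
  fixes G :: "('a, 'b) monoid_scheme" and A B C :: "'a set" and w :: "'a list" and g :: 'a
  assumes "amalgamated_product G A B C"
    and "C \<subset> A" and "C \<subset> B"
    and "w \<noteq> []" and "set w \<subseteq> (A \<union> B) - {\<one>\<^bsub>G\<^esub>}"
    and "reduced_word A B C (w @ w)"
    and "g \<in> carrier G"
  shows "\<exists>u. set u \<subseteq> (A \<union> B) - {\<one>\<^bsub>G\<^esub>} \<and> word_eval G u = g \<and>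
             geodesic G ((A \<union> B) - {\<one>\<^bsub>G\<^esub>}) u \<and>
             (\<forall>v. set v \<subseteq> (A \<union> B) - {\<one>\<^bsub>G\<^esub>} \<and> word_eval G v = g \<longrightarrow>
                  length u - occ_count w u \<le> length v - occ_count w v)"
proof -
  have grp: "group G" using assms(1) unfolding amalgamated_product_def by blast
  interpret amal G A B C using assms(1) grp by (simp add: amal_def amal_axioms_def)
  let ?S = "(A \<union> B) - {\<one>\<^bsub>G\<^esub>}"
  have aww: "alternating A B C (w @ w)" using assms(4,6) unfolding reduced_word_def by (cases w) auto
  have wsep: "sep A B C (last w) (hd w)" using aww assms(4) alternating_append by metis
  have aw: "alternating A B C w" using aww alternating_append by metis
  have wl: "last w \<notin> C" and wh: "hd w \<notin> C"
  proof -
    have "set w \<subseteq> (A-C)\<union>(B-C)" using aw unfolding alternating_def by (auto simp: in_set_conv_nth)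
    thus "last w \<notin> C" "hd w \<notin> C" using assms(4) last_in_set hd_in_set by (metis DiffD2 UnE subsetD)+
  qed
  obtain v0 where v0: "set v0 \<subseteq> ?S" "word_eval G v0 = g"
    using gen_word gen assms(7) by blast
  obtain v1 where v1: "set v1 \<subseteq> ?S \<and> word_eval G v1 = g"
    "\<forall>v. set v \<subseteq> ?S \<and> word_eval G v = g \<longrightarrow> length v1 - occ_count w v1 \<le> length v - occ_count w v"
    using ex_has_least_nat[of "\<lambda>v. set v \<subseteq> ?S \<and> word_eval G v = g" v0 "\<lambda>v. length v - occ_count w v"] v0
    by blast
  obtain u where u: "set u \<subseteq> ?S" "word_eval G u = word_eval G v1"
     "alternating A B C u \<or> length u \<le> 1"
     "length u - occ_count w u \<le> length v1 - occ_count w v1"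
    using R[OF assms(4) wsep wl wh] v1(1) by blast
  have geo: "geodesic G ?S u"
    unfolding geodesic_def word_length_def
  proof (intro conjI)
    show "set u \<subseteq> ?S" by (rule u(1))
    show "length u = (LEAST n. \<exists>v. set v \<subseteq> ?S \<and> length v = n \<and> word_eval G v = word_eval G u)"
    proof (rule Least_equality[symmetric])
      show "\<exists>v. set v \<subseteq> ?S \<and> length v = length u \<and> word_eval G v = word_eval G u" using u by blast
    next
      fix m assume "\<exists>v. set v \<subseteq> ?S \<and> length v = m \<and> word_eval G v = word_eval G u"
      then obtain v where v: "set v \<subseteq> ?S" "length v = m" "word_eval G v = word_eval G u" by blast
      obtain u' where u': "set u' \<subseteq> ?S" "word_eval G u' = word_eval G v"
         "alternating A B C u' \<or> length u' \<le> 1" "length u' \<le> length v"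
        using R[OF assms(4) wsep wl wh v(1)] by blast
      have "length u = length u'" using cmp[OF u(1) u(3) u'(1) u'(3)] u'(2) v(3) by simp
      thus "length u \<le> m" using u' v by simp
    qed
  qed
  show ?thesis using u v1 geo by (intro exI[of _ u]) auto
qed


end
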